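(* Let $G\in\mathcal{G}_{k,n,p}$ and $v,w\in V(G)$. Then $H_{wv}\lesssim (pn)^k$.
   Context: Fix an integer $k\ge2$ and let $p=p(n)$ satisfy $\frac{\log n}{n^{(k-1)/k}}\le p\le 1-\Omega(\frac{\log^4 n}{n})$. $\mathcal{G}_{k,n,p}$ denotes the set of graphs $G$ on $n$ vertices satisfying: (i) $G$ is not bipartite; (ii) $\operatorname{diam}(G)\le k$; (iii) every vertex has degree $d(v)=pn\pm\mathcal{O}(\sqrt{pn\log n})$; (iv) $2|E(G)|=pn^2\pm\mathcal{O}(\sqrt{pn^2\log n})$; (v) $|N(v)\cap N(w)|=p^2n\pm\mathcal{O}(\max\{\sqrt{p^2n\log n},\log n\})$ for all $v\ne w$; (vi) the unit eigenvector $\phi$ of the largest adjacency eigenvalue has entries $\phi_i=\frac1{\sqrt n}\pm\mathcal{O}(\frac{\log^{3/2}n}{\sqrt p\,n\log(pn)})$; (vii) $\lambda_1=(1+o(1))pn$; (viii) $\max\{|\lambda_2|,|\lambda_n|\}=\mathcal{O}(\sqrt{pn})$, where $\lambda_1\ge\dots\ge\lambda_n$ are the adjacency eigenvalues. Asymptotic notation is as $n\to\infty$ with constants independent of $n$; $f\lesssim g$ means $f=\mathcal{O}(g)$. $H_{wv}$ is the expected first hitting time of $v$ for a simple random walk on $G$ started at $w$. *)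

theory Defs
  imports "Jordan_Normal_Form.Char_Poly" "HOL-Library.Extended_Nonnegative_Real"
begin

definition simple_graph :: "nat \<Rightarrow> (nat \<Rightarrow> nat \<Rightarrow> bool) \<Rightarrow> bool" where
  "simple_graph n E \<longleftrightarrow> (\<forall>x y. E x y \<longrightarrow> x < n \<and> y < n \<and> x \<noteq> y \<and> E y x)"

definition nbhd :: "nat \<Rightarrow> (nat \<Rightarrow> nat \<Rightarrow> bool) \<Rightarrow> nat \<Rightarrow> nat set" where
  "nbhd n E x = {y. y < n \<and> E x y}"

definition degree :: "nat \<Rightarrow> (nat \<Rightarrow> nat \<Rightarrow> bool) \<Rightarrow> nat \<Rightarrow> nat" where
  "degree n E x = card (nbhd n E x)"

definition num_edges :: "nat \<Rightarrow> (nat \<Rightarrow> nat \<Rightarrow> bool) \<Rightarrow> nat" where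
  "num_edges n E = card {(x, y). x < y \<and> y < n \<and> E x y}"

definition bipartite :: "nat \<Rightarrow> (nat \<Rightarrow> nat \<Rightarrow> bool) \<Rightarrow> bool" where
  "bipartite n E \<longleftrightarrow> (\<exists>S. S \<subseteq> {0..<n} \<and>
      (\<forall>x y. E x y \<longrightarrow> (x \<in> S \<longleftrightarrow> y \<notin> S)))"

fun reach :: "nat \<Rightarrow> (nat \<Rightarrow> nat \<Rightarrow> bool) \<Rightarrow> nat \<Rightarrow> nat \<Rightarrow> nat \<Rightarrow> bool" where
  "reach n E 0 x y = (x = y)"
| "reach n E (Suc t) x y = (reach n E t x y \<or> (\<exists>z<n. reach n E t x z \<and> E z y))"

definition diam_le :: "nat \<Rightarrow> (nat \<Rightarrow> nat \<Rightarrow> bool) \<Rightarrow> nat \<Rightarrow> bool" where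
  "diam_le n E k \<longleftrightarrow> (\<forall>x<n. \<forall>y<n. reach n E k x y)"

definition adj_mat :: "nat \<Rightarrow> (nat \<Rightarrow> nat \<Rightarrow> bool) \<Rightarrow> real mat" where
  "adj_mat n E = mat n n (\<lambda>(i, j). if E i j then 1 else 0)"

definition adj_eigs :: "nat \<Rightarrow> (nat \<Rightarrow> nat \<Rightarrow> bool) \<Rightarrow> real multiset" where
  "adj_eigs n E = proots (char_poly (adj_mat n E))"

definition lambda1 :: "nat \<Rightarrow> (nat \<Rightarrow> nat \<Rightarrow> bool) \<Rightarrow> real" where
  "lambda1 n E = Max (set_mset (adj_eigs n E))"

text \<open>Probability that the simple random walk started at x has avoided v
  at all times 0..t.\<close>
fun surv :: "nat \<Rightarrow> (nat \<Rightarrow> nat \<Rightarrow> bool) \<Rightarrow> nat \<Rightarrow> nat \<Rightarrow> nat \<Rightarrow> real" where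
  "surv n E v 0 x = (if x = v then 0 else 1)"
| "surv n E v (Suc t) x = (if x = v then 0 else
      (\<Sum>y\<in>nbhd n E x. surv n E v t y) / real (degree n E x))"

text \<open>Expected first hitting time of v from w: E[T] = sum over t of P(T > t).\<close>
definition hitting_time :: "nat \<Rightarrow> (nat \<Rightarrow> nat \<Rightarrow> bool) \<Rightarrow> nat \<Rightarrow> nat \<Rightarrow> ennreal" where
  "hitting_time n E w v = (\<Sum>t. ennreal (surv n E v t w))"

text \<open>Membership in G_{k,n,p}, with C the (common) constant in all O-terms and
  eps the size of the o(1)-term in (vii).\<close>
definition in_Gclass :: "nat \<Rightarrow> nat \<Rightarrow> real \<Rightarrow> real \<Rightarrow> real \<Rightarrow> (nat \<Rightarrow> nat \<Rightarrow> bool) \<Rightarrow> bool" where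
  "in_Gclass k n p C eps E \<longleftrightarrow>
     simple_graph n E \<and>
     \<not> bipartite n E \<and>
     diam_le n E k \<and>
     (\<forall>v<n. \<bar>real (degree n E v) - p * n\<bar> \<le> C * sqrt (p * n * ln n)) \<and>
     \<bar>2 * real (num_edges n E) - p * n^2\<bar> \<le> C * sqrt (p * n^2 * ln n) \<and>
     (\<forall>v<n. \<forall>w<n. v \<noteq> w \<longrightarrow>
        \<bar>real (card (nbhd n E v \<inter> nbhd n E w)) - p^2 * n\<bar>
          \<le> C * max (sqrt (p^2 * n * ln n)) (ln n)) \<and>
     (\<exists>\<phi> :: nat \<Rightarrow> real.
        (\<Sum>i<n. (\<phi> i)^2) = 1 \<and>
        (\<forall>i<n. (\<Sum>j\<in>nbhd n E i. \<phi> j) = lambda1 n E * \<phi> i) \<and>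
        (\<forall>i<n. \<bar>\<phi> i - 1 / sqrt n\<bar> \<le> C * (ln n powr (3/2)) / (sqrt p * n * ln (p * n)))) \<and>
     \<bar>lambda1 n E - p * n\<bar> \<le> eps * (p * n) \<and>
     (\<forall>\<mu> \<in># adj_eigs n E - {# lambda1 n E #}. \<bar>\<mu>\<bar> \<le> C * sqrt (p * n))"

end

theory Submission imports Defs begin

lemma nbhd_fin: "finite (nbhd n E x)" unfolding nbhd_def by auto

lemma surv_v: "surv n E v t v = 0" by (cases t) auto

lemma surv_nonneg: "0 \<le> surv n E v t x"
proof (induction t arbitrary: x)
  case 0 then show ?case by simp
next
  case (Suc t) then show ?case by (simp add: sum_nonneg)
qed

lemma surv_le1: "surv n E v t x \<le> 1"
proof (induction t arbitrary: x)
  case 0 then show ?case by simp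
next
  case (Suc t)
  have "(\<Sum>y\<in>nbhd n E x. surv n E v t y) \<le> (\<Sum>y\<in>nbhd n E x. 1)"
    by (rule sum_mono) (use Suc in auto)
  also have "\<dots> = real (degree n E x)" by (simp add: degree_def)
  finally have h: "(\<Sum>y\<in>nbhd n E x. surv n E v t y) \<le> real (degree n E x)" .
  show ?case
  proof (cases "degree n E x = 0")
    case True then show ?thesis by simp
  next
    case False then show ?thesis using h by (simp add: divide_le_eq_1)
  qed
qed

lemma surv_mult:
  assumes "\<And>y. surv n E v t y \<le> M"
  shows "surv n E v (s + t) x \<le> M * surv n E v s x"
proof (induction s arbitrary: x)
  case 0 then show ?case using assms by (simp add: surv_v)
next
  case (Suc s)
  show ?case
  proof (cases "x = v")
    case True then show ?thesis by simp
  next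
    case False
    have "(\<Sum>y\<in>nbhd n E x. surv n E v (s + t) y) \<le> (\<Sum>y\<in>nbhd n E x. M * surv n E v s y)"
      by (rule sum_mono) (use Suc in auto)
    also have "\<dots> = M * (\<Sum>y\<in>nbhd n E x. surv n E v s y)" by (simp add: sum_distrib_left)
    finally have h: "(\<Sum>y\<in>nbhd n E x. surv n E v (s + t) y) \<le> M * (\<Sum>y\<in>nbhd n E x. surv n E v s y)" .
    have "surv n E v (Suc s + t) x = (\<Sum>y\<in>nbhd n E x. surv n E v (s + t) y) / real (degree n E x)"
      using False by simp
    also have "\<dots> \<le> M * (\<Sum>y\<in>nbhd n E x. surv n E v s y) / real (degree n E x)"
      by (rule divide_right_mono[OF h]) simp
    also have "\<dots> = M * surv n E v (Suc s) x" using False by simp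
    finally show ?thesis .
  qed
qed

lemma surv_mono: "surv n E v (Suc s) x \<le> surv n E v s x"
  using surv_mult[of n E v 1 1 s x] surv_le1[of n E v 1] by simp

lemma surv_antimono: "s \<le> t \<Longrightarrow> surv n E v t x \<le> surv n E v s x"
proof (induction t rule: dec_induct)
  case base show ?case by simp
next
  case (step m) show ?case using step.IH surv_mono[of n E v m x] by linarith
qed

lemma reach_mono: "reach n E t x y \<Longrightarrow> reach n E (Suc t) x y" by simp

lemma reach_refl: "reach n E t y y" by (induction t) auto

lemma reach_front:
  assumes sg: "simple_graph n E"
  shows "reach n E (Suc t) x y \<Longrightarrow> x = y \<or> reach n E t x y \<or> (\<exists>z<n. E x z \<and> reach n E t z y)"
proof (induction t arbitrary: y)
  case 0
  then have "x = y \<or> (E x y \<and> y < n)" using sg unfolding simple_graph_def by auto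
  then show ?case by (metis reach.simps(1))
next
  case (Suc t)
  from Suc.prems consider "reach n E (Suc t) x y" | z where "z < n" "reach n E (Suc t) x z" "E z y"
    by auto
  then show ?case
  proof cases
    case 1 then show ?thesis by auto
  next
    case 2
    from Suc.IH[OF 2(2)] consider "x = z" | "reach n E t x z" | z' where "z' < n" "E x z'" "reach n E t z' z"
      by auto
    then show ?thesis
    proof cases
      case 1 then have "E x y" "y < n" using 2 sg unfolding simple_graph_def by auto
      then show ?thesis using reach_refl[of n E "Suc t" y] by blast
    next
      case 2 then have "reach n E (Suc t) x y" using \<open>z < n\<close> \<open>E z y\<close> by auto
      then show ?thesis by auto
    next
      case 3 then have "reach n E (Suc t) z' y" using 2 by auto
      then show ?thesis using 3 by auto
    qed
  qed
qed

lemma surv_reach: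
  assumes sg: "simple_graph n E" and D1: "1 \<le> D" and deg: "\<And>x. x < n \<Longrightarrow> real (degree n E x) \<le> D"
  shows "reach n E t x v \<Longrightarrow> surv n E v t x \<le> 1 - 1 / D ^ t"
proof (induction t arbitrary: x)
  case 0 then show ?case by simp
next
  case (Suc t)
  have Dp: "0 < D" using D1 by simp
  have pw: "1 / D ^ Suc t \<le> 1 / D ^ t"
    using D1 Dp by (simp add: divide_simps) 
  have pw1: "1 / D ^ Suc t \<le> 1" using D1 one_le_power[OF D1, of "Suc t"] by simp
  show ?case
  proof (cases "x = v")
    case True then show ?thesis using pw1 by simp
  next
    case False
    from reach_front[OF sg Suc.prems] False consider "reach n E t x v" | z where "z < n" "E x z" "reach n E t z v"
      by auto
    then show ?thesis
    proof cases
      case 1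
      show ?thesis using Suc.IH[OF 1] surv_mono[of n E v t x] pw by linarith
    next
      case 2
      have xn: "x < n" using 2 sg unfolding simple_graph_def by auto
      define N where "N = nbhd n E x"
      have zN: "z \<in> N" using 2 unfolding N_def nbhd_def by auto
      have fN: "finite N" unfolding N_def by (rule nbhd_fin)
      have cN: "1 \<le> card N" using zN fN card_gt_0_iff[of N] by fastforce
      define d where "d = real (card N)"
      have dD: "d \<le> D" using deg[OF xn] unfolding d_def N_def degree_def by simp
      have d1: "1 \<le> d" using zN fN cN unfolding d_def by simp
      have "(\<Sum>y\<in>N. surv n E v t y) = surv n E v t z + (\<Sum>y\<in>N - {z}. surv n E v t y)"
        using zN fN by (simp add: sum.remove)
      also have "(\<Sum>y\<in>N - {z}. surv n E v t y) \<le> (\<Sum>y\<in>N - {z}. 1)"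
        by (rule sum_mono) (simp add: surv_le1)
      also have "(\<Sum>y\<in>N - {z}. (1::real)) = d - 1" using zN fN cN unfolding d_def by (simp add: of_nat_diff)
      finally have S: "(\<Sum>y\<in>N. surv n E v t y) \<le> d - 1 / D ^ t"
        using Suc.IH[OF 2(3)] by linarith
      have "surv n E v (Suc t) x = (\<Sum>y\<in>N. surv n E v t y) / d"
        using False unfolding N_def d_def by (simp add: degree_def)
      also have "\<dots> \<le> (d - 1 / D ^ t) / d" using S d1 by (simp add: divide_right_mono)
      also have "\<dots> = 1 - 1 / (d * D ^ t)" using d1 by (simp add: field_simps)
      also have "\<dots> \<le> 1 - 1 / (D * D ^ t)"
        using dD d1 Dp by (simp add: frac_le mult_right_mono)
      finally show ?thesis by simp
    qed
  qed
qed

lemma sum_split_add: "(\<Sum>t<(a::nat)+b. f t) = (\<Sum>t<a. f t) + (\<Sum>i<b. (f (a+i)::real))"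
  by (induction b) auto

lemma hitting_bound:
  assumes sg: "simple_graph n E" and D1: "1 \<le> D" and deg: "\<And>x. x < n \<Longrightarrow> real (degree n E x) \<le> D"
    and k1: "1 \<le> k" and vn: "v < n" and diam: "\<And>x. x < n \<Longrightarrow> reach n E k x v"
  shows "hitting_time n E w v \<le> ennreal (real k * D ^ k)"
proof -
  define q where "q = 1 / D ^ k"
  have Dp: "0 < D" using D1 by simp
  have q0: "0 < q" unfolding q_def using Dp by simp
  have q1: "q \<le> 1" unfolding q_def using one_le_power[OF D1, of k] by simp
  have sk: "surv n E v k x \<le> 1 - q" for x
  proof (cases "x < n")
    case True then show ?thesis using surv_reach[OF sg D1 deg diam[OF True]] unfolding q_def by simp
  next
    case False
    then have "nbhd n E x = {}" using sg unfolding simple_graph_def nbhd_def by auto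
    moreover obtain t where "k = Suc t" using k1 by (cases k) auto
    ultimately show ?thesis using q1 by simp
  qed
  have geo: "surv n E v (j * k) x \<le> (1 - q) ^ j" for j x
  proof (induction j arbitrary: x)
    case 0 then show ?case using surv_le1 by simp
  next
    case (Suc j)
    have "surv n E v (k + j * k) x \<le> (1 - q) ^ j * surv n E v k x"
      by (rule surv_mult) (rule Suc.IH)
    also have "\<dots> \<le> (1 - q) ^ j * (1 - q)"
      by (rule mult_left_mono[OF sk]) (use q1 in simp)
    finally show ?case by (simp add: mult.commute)
  qed
  have part: "(\<Sum>t<j * k. surv n E v t w) \<le> real k * (1 - (1 - q) ^ j) / q" for j
  proof (induction j)
    case 0 then show ?case by simp
  next
    case (Suc j)
    have "(\<Sum>i<k. surv n E v (j * k + i) w) \<le> (\<Sum>i<k. (1 - q) ^ j)"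
      by (rule sum_mono) (meson geo surv_antimono le_add1 order_trans)
    also have "\<dots> = real k * (1 - q) ^ j" by simp
    finally have h: "(\<Sum>i<k. surv n E v (j * k + i) w) \<le> real k * (1 - q) ^ j" .
    have "(\<Sum>t<Suc j * k. surv n E v t w) = (\<Sum>t<j * k. surv n E v t w) + (\<Sum>i<k. surv n E v (j * k + i) w)"
      using sum_split_add[where a="j * k" and b=k and f="\<lambda>t. surv n E v t w"] by (simp add: add.commute)
    also have "\<dots> \<le> real k * (1 - (1 - q) ^ j) / q + real k * (1 - q) ^ j"
      using Suc.IH h by linarith
    also have "\<dots> = real k * (1 - (1 - q) ^ Suc j) / q"
      using q0 by (simp add: field_simps)
    finally show ?case .
  qed
  have bnd: "(\<Sum>t<N. surv n E v t w) \<le> real k * D ^ k" for N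
  proof -
    have "(\<Sum>t<N. surv n E v t w) \<le> (\<Sum>t<N * k. surv n E v t w)"
      by (rule sum_mono2) (use k1 in \<open>auto simp: surv_nonneg\<close>)
    also have "\<dots> \<le> real k * (1 - (1 - q) ^ N) / q" by (rule part)
    also have "\<dots> \<le> real k / q"
    proof -
      have "0 \<le> (1 - q) ^ N" using q1 by simp
      then have "real k * (1 - (1 - q) ^ N) \<le> real k" by (simp add: mult_left_le)
      then show ?thesis using q0 by (simp add: divide_right_mono)
    qed
    also have "\<dots> = real k * D ^ k" unfolding q_def by simp
    finally show ?thesis .
  qed
  have sm: "summable (\<lambda>t. surv n E v t w)"
    by (rule summableI_nonneg_bounded[OF surv_nonneg bnd])
  have "hitting_time n E w v = ennreal (\<Sum>t. surv n E v t w)"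
    unfolding hitting_time_def by (rule suminf_ennreal2[OF surv_nonneg sm])
  also have "\<dots> \<le> ennreal (real k * D ^ k)"
    by (rule ennreal_leI, rule suminf_le_const[OF sm bnd])
  finally show ?thesis .
qed


lemma num_facts:
  fixes k n :: nat and pn :: real
  assumes k2: "k \<ge> 2" and n3: "(3::real) \<le> real n"
    and h: "ln n / real n powr ((real k - 1) / real k) \<le> pn"
  shows "1 \<le> pn * real n \<and> sqrt (pn * real n * ln n) \<le> pn * real n \<and> 0 \<le> sqrt (pn * real n * ln n)"
proof -
  define P where "P = pn * real n"
  have ln1: "1 \<le> ln (real n)"
  proof -
    have "exp 1 \<le> (3::real)" using exp_le by simp
    also have "\<dots> \<le> real n" by (rule n3)
    finally show ?thesis using ln_ge_iff[of "real n" 1] n3 by simp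
  qed
  have "real n powr ((real k - 1) / real k) \<le> real n powr 1"
  proof (rule powr_mono)
    have kpos: "0 < real k" using k2 by simp
    show "(real k - 1) / real k \<le> 1" using kpos by (simp add: divide_le_eq_1)
    show "1 \<le> real n" using n3 by linarith
  qed
  then have pw: "real n powr ((real k - 1) / real k) \<le> real n" using n3 by simp
  have pwpos: "0 < real n powr ((real k - 1) / real k)" using n3 by simp
  have "ln n / real n \<le> ln n / real n powr ((real k - 1) / real k)"
    by (rule frac_le) (use ln1 pw pwpos in linarith)+
  then have "ln n / real n \<le> pn" using h by linarith
  then have PL: "ln n \<le> P" unfolding P_def using pos_divide_le_eq[of "real n" "ln n" pn] n3 by linarith
  have P1: "1 \<le> P" using PL ln1 by linarith
  have "P * ln n \<le> P * P" using PL P1 by (simp add: mult_left_mono)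
  then have "sqrt (P * ln n) \<le> sqrt (P * P)" by (rule real_sqrt_le_mono)
  also have "\<dots> = P" using P1 by simp
  finally have sq: "sqrt (P * ln n) \<le> P" .
  have sqn: "0 \<le> sqrt (P * ln n)" using P1 ln1 by simp
  show ?thesis using P1 sq sqn unfolding P_def by simp
qed

theorem lemma4p2:
  fixes k :: nat and p :: "nat \<Rightarrow> real" and C :: real and eps :: "nat \<Rightarrow> real"
  assumes "k \<ge> 2"
    and "\<forall>\<^sub>F n in sequentially. ln n / real n powr ((real k - 1) / real k) \<le> p n"
    and "\<exists>c>0. \<forall>\<^sub>F n in sequentially. p n \<le> 1 - c * (ln n)^4 / real n"
    and "eps \<longlonglongrightarrow> 0"
  shows "\<exists>K. \<forall>\<^sub>F n in sequentially. \<forall>E. in_Gclass k n (p n) C (eps n) E \<longrightarrow>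
           (\<forall>v<n. \<forall>w<n. hitting_time n E w v \<le> ennreal (K * (p n * real n) ^ k))"
proof (intro exI[of _ "real k * (1 + \<bar>C\<bar>) ^ k"])
  have ev: "\<forall>\<^sub>F n in sequentially. n \<ge> 3 \<and> ln n / real n powr ((real k - 1) / real k) \<le> p n"
    using assms(2) eventually_ge_at_top[of "3::nat"] by eventually_elim (rule conjI)
  show "\<forall>\<^sub>F n in sequentially. \<forall>E. in_Gclass k n (p n) C (eps n) E \<longrightarrow>
           (\<forall>v<n. \<forall>w<n. hitting_time n E w v \<le> ennreal (real k * (1 + \<bar>C\<bar>) ^ k * (p n * real n) ^ k))"
    using ev
  proof eventually_elim
    case (elim n)
    define P where "P = p n * real n"
    have n3: "(3::real) \<le> real n" using elim by simp
    have nf: "1 \<le> P \<and> sqrt (P * ln n) \<le> P \<and> 0 \<le> sqrt (P * ln n)"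
      unfolding P_def by (rule num_facts[OF assms(1) n3]) (use elim in blast)
    then have P1: "1 \<le> P" and sq: "sqrt (P * ln n) \<le> P" and sqn: "0 \<le> sqrt (P * ln n)"
      by auto
    show ?case
    proof (intro allI impI)
      fix E v w assume G: "in_Gclass k n (p n) C (eps n) E" and vn: "v < n" and wn: "w < n"
      define D where "D = (1 + \<bar>C\<bar>) * P"
      have D1: "1 \<le> D"
      proof -
        have "1 * 1 \<le> (1 + \<bar>C\<bar>) * P" by (rule mult_mono) (use P1 in auto)
        then show ?thesis unfolding D_def by simp
      qed
      have dg: "\<forall>v<n. \<bar>real (degree n E v) - p n * real n\<bar> \<le> C * sqrt (p n * real n * ln n)"
        by (insert G, unfold in_Gclass_def, elim conjE, assumption)
      have deg: "real (degree n E x) \<le> D" if "x < n" for x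
      proof -
        have "\<bar>real (degree n E x) - P\<bar> \<le> C * sqrt (P * ln n)"
          using dg that unfolding P_def by blast
        also have "\<dots> \<le> \<bar>C\<bar> * sqrt (P * ln n)"
          by (rule mult_right_mono) (use sqn in auto)
        also have "\<dots> \<le> \<bar>C\<bar> * P" by (rule mult_left_mono) (use sq in auto)
        finally have "real (degree n E x) \<le> P + \<bar>C\<bar> * P" by linarith
        then show ?thesis unfolding D_def by (simp add: distrib_right)
      qed
      have sg: "simple_graph n E" by (insert G, unfold in_Gclass_def, elim conjE, assumption)
      have dl: "diam_le n E k" by (insert G, unfold in_Gclass_def, elim conjE, assumption)
      have diam: "reach n E k x v" if "x < n" for x
        using dl that vn unfolding diam_le_def by blast
      have k1: "1 \<le> k" using assms(1) by simp
      have "hitting_time n E w v \<le> ennreal (real k * D ^ k)"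
        by (rule hitting_bound[OF sg D1 deg k1 vn diam])
      also have "real k * D ^ k = real k * (1 + \<bar>C\<bar>) ^ k * (p n * real n) ^ k"
        unfolding D_def P_def by (simp add: power_mult_distrib)
      finally show "hitting_time n E w v \<le> ennreal (real k * (1 + \<bar>C\<bar>) ^ k * (p n * real n) ^ k)" .
    qed
  qed
qed

end
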